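(* Let $\dim V=2$ and assume $V$ is a quantum linear space, i.e. $p_{12}p_{21}=1$. Then $$\mathfrak{L}^-(V)=\operatorname{span}\big\{x_1,\;x_2,\;x_2^{\alpha_2}x_1^{\alpha_1}\ :\ 1\le\alpha_2<N_2,\ 1\le\alpha_1<N_1,\ \operatorname{ord}(p_{12})\nmid\alpha_2\ \text{or}\ \operatorname{ord}(p_{12})\nmid\alpha_1\big\},$$ where for $i=1,2$, $N_i:=\operatorname{ord}(p_{ii})$ if $1<\operatorname{ord}(p_{ii})<\infty$, and $N_i:=\infty$ if $p_{ii}=1$ or $p_{ii}$ is not a root of unity.
   Context: $V$ is a braided vector space of diagonal type over an algebraically closed field $F$ of characteristic $0$ with basis $x_1,x_2$, braiding $C(x_i\otimes x_j)=q_{ij}x_j\otimes x_i$, $p_{ij}:=q_{ij}$, and Nichols algebra $\mathfrak{B}(V)$. $\mathfrak{L}^-(V)$ is the Lie subalgebra of $\mathfrak{B}(V)$ generated by $V$ under the commutator $[a,b]^-=ab-ba$. $\operatorname{ord}(a)$ is the multiplicative order of $a\in F^*$ ($\infty$ if $a$ is not a root of unity), and by convention $\infty$ does not divide any integer. *)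

theory Defs
  imports "HOL-Combinatorics.Permutations" "HOL-Computational_Algebra.Polynomial" "HOL-Library.Extended_Nat"
begin

text \<open>Tensor algebra T(V) of V = span{x_1,x_2}: elements are coefficient functions on
  words (lists over the letters 1 and 2), finitely supported.\<close>

type_synonym 'a tens = "nat list \<Rightarrow> 'a"

definition letters :: "nat set" where "letters = {1, 2}"

definition tensor_alg :: "'a::field tens set" where
  "tensor_alg = {f. finite {w. f w \<noteq> 0} \<and> (\<forall>w. f w \<noteq> 0 \<longrightarrow> set w \<subseteq> letters)}"

definition tzero :: "'a::field tens" where "tzero = (\<lambda>w. 0)"
definition tadd :: "'a::field tens \<Rightarrow> 'a tens \<Rightarrow> 'a tens" where
  "tadd f g = (\<lambda>w. f w + g w)"
definition tsmult :: "'a::field \<Rightarrow> 'a tens \<Rightarrow> 'a tens" where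
  "tsmult c f = (\<lambda>w. c * f w)"
definition tmult :: "'a::field tens \<Rightarrow> 'a tens \<Rightarrow> 'a tens" where
  "tmult f g = (\<lambda>w. \<Sum>k\<le>length w. f (take k w) * g (drop k w))"
definition tcomm :: "'a::field tens \<Rightarrow> 'a tens \<Rightarrow> 'a tens" where
  "tcomm f g = (\<lambda>w. tmult f g w - tmult g f w)"

definition mono :: "nat list \<Rightarrow> 'a::field tens" where
  "mono v = (\<lambda>w. if w = v then 1 else 0)"

definition gen :: "nat \<Rightarrow> 'a::field tens" where "gen i = mono [i]"

inductive_set tspan :: "'a::field tens set \<Rightarrow> 'a tens set" for S where
  zero: "tzero \<in> tspan S"
| step: "a \<in> tspan S \<Longrightarrow> s \<in> S \<Longrightarrow> tadd a (tsmult c s) \<in> tspan S"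

inductive_set lie_gen :: "'a::field tens set" where
  gen: "i \<in> letters \<Longrightarrow> gen i \<in> lie_gen"
| add: "a \<in> lie_gen \<Longrightarrow> b \<in> lie_gen \<Longrightarrow> tadd a b \<in> lie_gen"
| smult: "a \<in> lie_gen \<Longrightarrow> tsmult c a \<in> lie_gen"
| comm: "a \<in> lie_gen \<Longrightarrow> b \<in> lie_gen \<Longrightarrow> tcomm a b \<in> lie_gen"

definition words :: "nat \<Rightarrow> nat list set" where
  "words n = {w. length w = n \<and> set w \<subseteq> letters}"

text \<open>Braided (quantum) symmetrizer Omega_n = sum over sigma in S_n of T_sigma, for the diagonal
  braiding c(x_i x_j) = q i j x_j x_i.  For a permutation tau of {0..<n} the word w is sent to
  the word v = w o tau with coefficient the product of q (w!tau p) (w!tau r) over the pairs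
  r < p with tau r > tau p (i.e. the letters that are braided past each other).\<close>
definition braid_coef :: "(nat \<Rightarrow> nat \<Rightarrow> 'a::field) \<Rightarrow> nat \<Rightarrow> (nat \<Rightarrow> nat) \<Rightarrow> nat list \<Rightarrow> 'a" where
  "braid_coef q n \<tau> w =
     (\<Prod>(r, p) \<in> {(r, p). r < p \<and> p < n \<and> \<tau> r > \<tau> p}. q (w ! \<tau> p) (w ! \<tau> r))"

definition permute_word :: "nat \<Rightarrow> (nat \<Rightarrow> nat) \<Rightarrow> nat list \<Rightarrow> nat list" where
  "permute_word n \<tau> w = map (\<lambda>p. w ! \<tau> p) [0..<n]"

definition symmetrizer :: "(nat \<Rightarrow> nat \<Rightarrow> 'a::field) \<Rightarrow> nat \<Rightarrow> 'a tens \<Rightarrow> 'a tens" where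
  "symmetrizer q n f = (\<lambda>v. \<Sum>w\<in>words n. f w *
      (\<Sum>\<tau>\<in>{\<tau>. \<tau> permutes {..<n}}.
          if permute_word n \<tau> w = v then braid_coef q n \<tau> w else 0))"

text \<open>The defining ideal of the Nichols algebra: B(V) = T(V) / (direct sum of ker Omega_n).\<close>
definition nichols_ideal :: "(nat \<Rightarrow> nat \<Rightarrow> 'a::field) \<Rightarrow> 'a tens set" where
  "nichols_ideal q = {f \<in> tensor_alg. \<forall>n. symmetrizer q n f = tzero}"

text \<open>Full preimage in T(V) of the image of A in B(V).\<close>
definition mod_nichols :: "(nat \<Rightarrow> nat \<Rightarrow> 'a::field) \<Rightarrow> 'a tens set \<Rightarrow> 'a tens set" where
  "mod_nichols q A = {tadd a i | a i. a \<in> A \<and> i \<in> nichols_ideal q}"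

definition ordr :: "'a::field \<Rightarrow> enat" where
  "ordr a = (if \<exists>n>0. a ^ n = 1 then enat (LEAST n. n > 0 \<and> a ^ n = 1) else \<infinity>)"

definition ord_dvd :: "'a::field \<Rightarrow> nat \<Rightarrow> bool" where
  "ord_dvd a k = (\<exists>n. ordr a = enat n \<and> n dvd k)"

definition Nbound :: "'a::field \<Rightarrow> enat" where
  "Nbound a = (if 1 < ordr a \<and> ordr a < \<infinity> then ordr a else \<infinity>)"

definition qls_spanning_set :: "(nat \<Rightarrow> nat \<Rightarrow> 'a::field) \<Rightarrow> 'a tens set" where
  "qls_spanning_set q = {gen 1, gen 2} \<union>
     {mono (replicate a2 2 @ replicate a1 1) | a2 a1.
        1 \<le> a2 \<and> enat a2 < Nbound (q 2 2) \<and> 1 \<le> a1 \<and> enat a1 < Nbound (q 1 1) \<and>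
        (\<not> ord_dvd (q 1 2) a2 \<or> \<not> ord_dvd (q 1 2) a1)}"

end

theory Submission
  imports Defs
begin


definition grow :: "nat \<Rightarrow> nat \<Rightarrow> nat" where "grow j t = (if t < j then t else Suc t)"
definition shrink :: "nat \<Rightarrow> nat \<Rightarrow> nat" where "shrink j t = (if t < j then t else t - 1)"
definition pext :: "nat \<Rightarrow> nat \<Rightarrow> (nat \<Rightarrow> nat) \<Rightarrow> nat \<Rightarrow> nat" where
  "pext n j s p = (if p < n then grow j (s p) else if p = n then j else p)"
definition prestr :: "nat \<Rightarrow> (nat \<Rightarrow> nat) \<Rightarrow> nat \<Rightarrow> nat" where
  "prestr n t p = (if p < n then shrink (t n) (t p) else p)"

lemma pext_permutes:
  assumes j: "j \<le> n" and s: "s permutes {..<n}"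
  shows "pext n j s permutes {..<Suc n}"
proof (rule bij_imp_permutes)
  have sin: "\<And>x. x < n \<Longrightarrow> s x < n" using permutes_in_image[OF s] by simp
  have sinj: "\<And>x y. s x = s y \<Longrightarrow> x = y" using permutes_inj[OF s] by (meson injD)
  have im: "pext n j s ` {..<Suc n} \<subseteq> {..<Suc n}"
  proof
    fix y assume "y \<in> pext n j s ` {..<Suc n}"
    then obtain x where x: "x < Suc n" "y = pext n j s x" by auto
    show "y \<in> {..<Suc n}"
    proof (cases "x < n")
      case True then have "s x < n" using sin by simp
      then show ?thesis using x True by (simp add: pext_def grow_def)
    next
      case False then have "x = n" using x by simp
      then show ?thesis using x j by (simp add: pext_def)
    qed
  qed
  have inj: "inj_on (pext n j s) {..<Suc n}"
  proof (rule inj_onI)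
    fix x y assume x: "x \<in> {..<Suc n}" and y: "y \<in> {..<Suc n}" and e: "pext n j s x = pext n j s y"
    show "x = y"
    proof (cases "x < n")
      case xn: True
      show ?thesis
      proof (cases "y < n")
        case True
        then have "grow j (s x) = grow j (s y)" using e xn by (simp add: pext_def)
        then have "s x = s y" by (simp add: grow_def split: if_splits)
        then show ?thesis by (rule sinj)
      next
        case False then have "y = n" using y by simp
        then have "grow j (s x) = j" using e xn by (simp add: pext_def)
        then show ?thesis by (simp add: grow_def split: if_splits)
      qed
    next
      case xn: False
      then have xe: "x = n" using x by simp
      show ?thesis
      proof (cases "y < n")
        case True
        then have "grow j (s y) = j" using e xe by (simp add: pext_def)
        then show ?thesis by (simp add: grow_def split: if_splits)
      next
        case False then show ?thesis using y xe by simp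
      qed
    qed
  qed
  show "bij_betw (pext n j s) {..<Suc n} {..<Suc n}"
    using endo_inj_surj[OF _ im inj] inj by (simp add: bij_betw_def)
  show "\<And>x. x \<notin> {..<Suc n} \<Longrightarrow> pext n j s x = x" by (simp add: pext_def)
qed

lemma prestr_permutes:
  assumes t: "t permutes {..<Suc n}"
  shows "prestr n t permutes {..<n}"
proof (rule bij_imp_permutes)
  have tin: "\<And>x. x < Suc n \<Longrightarrow> t x < Suc n" using permutes_in_image[OF t] by auto
  have tinj: "\<And>x y. t x = t y \<Longrightarrow> x = y" using permutes_inj[OF t] by (meson injD)
  have im: "prestr n t ` {..<n} \<subseteq> {..<n}"
  proof
    fix y assume "y \<in> prestr n t ` {..<n}"
    then obtain x where x: "x < n" "y = prestr n t x" by auto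
    have "t x \<noteq> t n" using tinj x by auto
    moreover have "t x < Suc n" "t n < Suc n" using tin x by auto
    ultimately show "y \<in> {..<n}" using x by (auto simp: prestr_def shrink_def)
  qed
  have inj: "inj_on (prestr n t) {..<n}"
  proof (rule inj_onI)
    fix x y assume x: "x \<in> {..<n}" and y: "y \<in> {..<n}" and e: "prestr n t x = prestr n t y"
    have "t x \<noteq> t n" "t y \<noteq> t n" using tinj x y by auto
    then have "t x = t y" using e x y by (auto simp: prestr_def shrink_def split: if_splits)
    then show "x = y" using tinj by auto
  qed
  show "bij_betw (prestr n t) {..<n} {..<n}"
    using endo_inj_surj[OF _ im inj] inj by (simp add: bij_betw_def)
  show "\<And>x. x \<notin> {..<n} \<Longrightarrow> prestr n t x = x" by (auto simp: prestr_def)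
qed

lemma pext_prestr:
  assumes t: "t permutes {..<Suc n}"
  shows "pext n (t n) (prestr n t) = t"
proof
  fix p
  have tinj: "\<And>x y. t x = t y \<Longrightarrow> x = y" using permutes_inj[OF t] by (meson injD)
  show "pext n (t n) (prestr n t) p = t p"
  proof (cases "p < n")
    case True
    then have "t p \<noteq> t n" using tinj by auto
    then show ?thesis using True by (auto simp: pext_def prestr_def grow_def shrink_def)
  next
    case False
    then show ?thesis using permutes_not_in[OF t, of p] by (auto simp: pext_def prestr_def)
  qed
qed

lemma prestr_pext:
  assumes j: "j \<le> n" and s: "s permutes {..<n}"
  shows "prestr n (pext n j s) = s" and "pext n j s n = j"
proof -
  show "pext n j s n = j" by (simp add: pext_def)
  show "prestr n (pext n j s) = s"
  proof
    fix p show "prestr n (pext n j s) p = s p"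
      using permutes_not_in[OF s, of p]
      by (auto simp: pext_def prestr_def grow_def shrink_def)
  qed
qed

lemma sum_perm_Suc:
  "(\<Sum>t\<in>{t. t permutes {..<Suc n}}. F t) =
   (\<Sum>j\<le>n. \<Sum>s\<in>{s. s permutes {..<n}}. F (pext n j s))"
proof -
  let ?A = "{..n} \<times> {s. s permutes {..<n}}"
  have bij: "bij_betw (\<lambda>(j,s). pext n j s) ?A {t. t permutes {..<Suc n}}"
  proof (rule bij_betw_byWitness[where f' = "\<lambda>t. (t n, prestr n t)"])
    show "\<forall>a\<in>?A. (\<lambda>t. (t n, prestr n t)) ((\<lambda>(j,s). pext n j s) a) = a"
    proof
      fix a assume a: "a \<in> ?A"
      obtain j s where js: "a = (j, s)" by fastforce
      have "j \<le> n" "s permutes {..<n}" using a js by auto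
      then show "(\<lambda>t. (t n, prestr n t)) ((\<lambda>(j,s). pext n j s) a) = a"
        using prestr_pext[of j n s] js by simp
    qed
    show "\<forall>a'\<in>{t. t permutes {..<Suc n}}. (\<lambda>(j, s). pext n j s) ((\<lambda>t. (t n, prestr n t)) a') = a'"
    proof
      fix t assume "t \<in> {t. t permutes {..<Suc n}}"
      then show "(\<lambda>(j, s). pext n j s) ((\<lambda>t. (t n, prestr n t)) t) = t"
        using pext_prestr[of t n] by simp
    qed
    show "(\<lambda>(j, s). pext n j s) ` ?A \<subseteq> {t. t permutes {..<Suc n}}"
    proof
      fix x assume "x \<in> (\<lambda>(j, s). pext n j s) ` ?A"
      then obtain j s where "j \<le> n" "s permutes {..<n}" "x = pext n j s" by auto
      then show "x \<in> {t. t permutes {..<Suc n}}" using pext_permutes by simp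
    qed
    show "(\<lambda>t. (t n, prestr n t)) ` {t. t permutes {..<Suc n}} \<subseteq> ?A"
    proof
      fix x assume "x \<in> (\<lambda>t. (t n, prestr n t)) ` {t. t permutes {..<Suc n}}"
      then obtain t where t: "t permutes {..<Suc n}" "x = (t n, prestr n t)" by auto
      have "t n < Suc n" using permutes_in_image[OF t(1), of n] by auto
      then show "x \<in> ?A" using t prestr_permutes[OF t(1)] by auto
    qed
  qed
  have "(\<Sum>t\<in>{t. t permutes {..<Suc n}}. F t) = (\<Sum>x\<in>?A. F ((\<lambda>(j,s). pext n j s) x))"
    using sum.reindex_bij_betw[OF bij, of F] by simp
  also have "\<dots> = (\<Sum>(j,s)\<in>?A. F (pext n j s))"
    by (rule sum.cong[OF refl]) (simp add: split_def)
  also have "\<dots> = (\<Sum>j\<le>n. \<Sum>s\<in>{s. s permutes {..<n}}. F (pext n j s))"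
    by (rule sum.cartesian_product[symmetric])
  finally show ?thesis .
qed



definition rem :: "nat \<Rightarrow> 'b list \<Rightarrow> 'b list" where "rem j w = take j w @ drop (Suc j) w"

lemma length_rem: "j < length w \<Longrightarrow> length (rem j w) = length w - 1"
  by (simp add: rem_def)

lemma nth_rem: "j < length w \<Longrightarrow> i < length w - 1 \<Longrightarrow> rem j w ! i = w ! grow j i"
  by (auto simp: rem_def grow_def nth_append min_def)

lemma set_rem: "set (rem j w) \<subseteq> set w"
  by (auto simp: rem_def dest: in_set_takeD in_set_dropD)

lemma pw_pext:
  assumes lw: "length w = Suc n" and j: "j \<le> n" and s: "s permutes {..<n}"
  shows "permute_word (Suc n) (pext n j s) w = permute_word n s (rem j w) @ [w ! j]"
proof -
  have 1: "permute_word (Suc n) (pext n j s) w = map (\<lambda>p. w ! pext n j s p) [0..<n] @ [w ! j]"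
    by (simp add: permute_word_def pext_def)
  have 2: "map (\<lambda>p. w ! pext n j s p) [0..<n] = permute_word n s (rem j w)"
    unfolding permute_word_def
  proof (rule map_cong[OF refl])
    fix p assume "p \<in> set [0..<n]"
    then have p: "p < n" by simp
    then have "s p < n" using permutes_in_image[OF s] by auto
    then show "w ! pext n j s p = rem j w ! s p"
      using p lw j by (simp add: pext_def nth_rem)
  qed
  show ?thesis using 1 2 by simp
qed

lemma bc_pext:
  assumes lw: "length w = Suc n" and j: "j \<le> n" and s: "s permutes {..<n}"
  shows "braid_coef q (Suc n) (pext n j s) w =
         braid_coef q n s (rem j w) * (\<Prod>i\<in>{j..<n}. q (w ! j) (w ! Suc i))"
proof -
  let ?t = "pext n j s"
  have sin: "\<And>x. x < n \<Longrightarrow> s x < n" using permutes_in_image[OF s] by auto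
  have sinj: "\<And>x y. s x = s y \<Longrightarrow> x = y" using permutes_inj[OF s] by (meson injD)
  let ?I1 = "{(r, p). r < p \<and> p < n \<and> s r > s p}"
  let ?I2 = "(\<lambda>r. (r, n)) ` {r. r < n \<and> s r \<ge> j}"
  have key: "(r < p \<and> p < Suc n \<and> ?t r > ?t p) \<longleftrightarrow> ((r, p) \<in> ?I1 \<union> ?I2)" for r p
  proof (cases "p < n")
    case True
    then show ?thesis using sin[of r] sin[of p]
      by (auto simp: pext_def grow_def split: if_splits)
  next
    case False
    then show ?thesis using sin[of r]
      by (auto simp: pext_def grow_def split: if_splits)
  qed
  have split: "{(r, p). r < p \<and> p < Suc n \<and> ?t r > ?t p} = ?I1 \<union> ?I2"
    using key by blast
  have fin1: "finite ?I1"
    by (rule finite_subset[of _ "{..<n} \<times> {..<n}"]) auto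
  have fin2: "finite ?I2" by auto
  have disj: "?I1 \<inter> ?I2 = {}" by auto
  have "braid_coef q (Suc n) ?t w =
        (\<Prod>(r, p)\<in>?I1. q (w ! ?t p) (w ! ?t r)) * (\<Prod>(r, p)\<in>?I2. q (w ! ?t p) (w ! ?t r))"
    unfolding braid_coef_def split by (rule prod.union_disjoint[OF fin1 fin2 disj])
  also have "(\<Prod>(r, p)\<in>?I1. q (w ! ?t p) (w ! ?t r)) = braid_coef q n s (rem j w)"
    unfolding braid_coef_def
  proof (rule prod.cong[OF refl], clarify)
    fix r p assume "r < p" "p < n" "s p < s r"
    then show "q (w ! ?t p) (w ! ?t r) = q (rem j w ! s p) (rem j w ! s r)"
      using sin[of p] sin[of r] lw j by (simp add: pext_def nth_rem)
  qed
  also have "(\<Prod>(r, p)\<in>?I2. q (w ! ?t p) (w ! ?t r)) = (\<Prod>r\<in>{r. r < n \<and> s r \<ge> j}. q (w ! j) (w ! Suc (s r)))"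
    by (subst prod.reindex) (auto simp: inj_on_def pext_def grow_def intro!: prod.cong)
  also have "\<dots> = (\<Prod>i\<in>{j..<n}. q (w ! j) (w ! Suc i))"
  proof (rule prod.reindex_bij_betw)
    show "bij_betw s {r. r < n \<and> j \<le> s r} {j..<n}"
    proof (rule bij_betw_imageI)
      show "inj_on s {r. r < n \<and> j \<le> s r}" using sinj by (auto simp: inj_on_def)
      show "s ` {r. r < n \<and> j \<le> s r} = {j..<n}"
      proof
        show "s ` {r. r < n \<and> j \<le> s r} \<subseteq> {j..<n}" using sin by auto
        show "{j..<n} \<subseteq> s ` {r. r < n \<and> j \<le> s r}"
        proof
          fix i assume i: "i \<in> {j..<n}"
          have "i \<in> s ` {..<n}" using permutes_image[OF s] i by auto
          then obtain r where "r < n" "i = s r" by auto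
          then show "i \<in> s ` {r. r < n \<and> j \<le> s r}" using i by auto
        qed
      qed
    qed
  qed
  finally show ?thesis .
qed



definition Sw :: "(nat \<Rightarrow> nat \<Rightarrow> 'a::field) \<Rightarrow> nat \<Rightarrow> nat list \<Rightarrow> nat list \<Rightarrow> 'a" where
  "Sw q n w v = (\<Sum>t\<in>{t. t permutes {..<n}}. if permute_word n t w = v then braid_coef q n t w else 0)"

lemma symmetrizer_Sw: "symmetrizer q n f v = (\<Sum>w\<in>words n. f w * Sw q n w v)"
  by (simp add: symmetrizer_def Sw_def)

lemma Sw_Suc:
  assumes lw: "length w = Suc n"
  shows "Sw q (Suc n) w (v @ [x]) =
    (\<Sum>j\<le>n. if w ! j = x then (\<Prod>i\<in>{j..<n}. q (w ! j) (w ! Suc i)) * Sw q n (rem j w) v else 0)"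
proof -
  have "Sw q (Suc n) w (v @ [x]) = (\<Sum>j\<le>n. \<Sum>s\<in>{s. s permutes {..<n}}.
      if permute_word (Suc n) (pext n j s) w = v @ [x] then braid_coef q (Suc n) (pext n j s) w else 0)"
    unfolding Sw_def by (rule sum_perm_Suc)
  also have "\<dots> = (\<Sum>j\<le>n. if w ! j = x then (\<Prod>i\<in>{j..<n}. q (w ! j) (w ! Suc i)) * Sw q n (rem j w) v else 0)"
  proof (rule sum.cong[OF refl])
    fix j assume "j \<in> {..n}"
    then have j: "j \<le> n" by simp
    have "(\<Sum>s\<in>{s. s permutes {..<n}}.
      if permute_word (Suc n) (pext n j s) w = v @ [x] then braid_coef q (Suc n) (pext n j s) w else 0)
      = (\<Sum>s\<in>{s. s permutes {..<n}}. if w ! j = x then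
           (\<Prod>i\<in>{j..<n}. q (w ! j) (w ! Suc i)) * (if permute_word n s (rem j w) = v then braid_coef q n s (rem j w) else 0) else 0)"
    proof (rule sum.cong[OF refl])
      fix s assume "s \<in> {s. s permutes {..<n}}"
      then have s: "s permutes {..<n}" by simp
      show "(if permute_word (Suc n) (pext n j s) w = v @ [x] then braid_coef q (Suc n) (pext n j s) w else 0)
        = (if w ! j = x then (\<Prod>i\<in>{j..<n}. q (w ! j) (w ! Suc i)) *
             (if permute_word n s (rem j w) = v then braid_coef q n s (rem j w) else 0) else 0)"
        using pw_pext[OF lw j s] bc_pext[OF lw j s, of q] by (auto simp: mult.commute)
    qed
    also have "\<dots> = (if w ! j = x then (\<Prod>i\<in>{j..<n}. q (w ! j) (w ! Suc i)) * Sw q n (rem j w) v else 0)"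
      by (simp add: Sw_def sum_distrib_left)
    finally show "(\<Sum>s\<in>{s. s permutes {..<n}}.
      if permute_word (Suc n) (pext n j s) w = v @ [x] then braid_coef q (Suc n) (pext n j s) w else 0)
      = (if w ! j = x then (\<Prod>i\<in>{j..<n}. q (w ! j) (w ! Suc i)) * Sw q n (rem j w) v else 0)" .
  qed
  finally show ?thesis .
qed

fun mm :: "nat list \<Rightarrow> nat" where
  "mm [] = 0"
| "mm (c # w) = (if c = 1 then count_list w 2 else 0) + mm w"

lemma mm_append: "mm (u @ u') = mm u + mm u' + count_list u 1 * count_list u' 2"
  by (induction u) (auto simp: algebra_simps)

definition qint :: "'a::field \<Rightarrow> nat \<Rightarrow> 'a" where "qint y k = (\<Sum>t<k. y ^ t)"
definition qf :: "'a::field \<Rightarrow> nat \<Rightarrow> 'a" where "qf y k = (\<Prod>i\<in>{1..k}. qint y i)"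

lemma qf_0[simp]: "qf y 0 = 1" by (simp add: qf_def)
lemma qf_Suc: "qf y (Suc k) = qf y k * qint y (Suc k)"
  by (simp add: qf_def prod.cl_ivl_Suc)

lemma sum_pos_count:
  "(\<Sum>j<length w. if w ! j = x then y ^ count_list (drop (Suc j) w) x else 0) = qint y (count_list w x)"
proof (induction w)
  case Nil then show ?case by (simp add: qint_def)
next
  case (Cons c w)
  define F where "F = (\<lambda>j. if (c # w) ! j = x then y ^ count_list (drop (Suc j) (c # w)) x else 0)"
  have e: "(\<Sum>j<length (c # w). F j) = F 0 + (\<Sum>j<length w. F (Suc j))"
    by (simp add: sum.lessThan_Suc_shift del: sum.lessThan_Suc)
  have e2: "(\<Sum>j<length w. F (Suc j)) = (\<Sum>j<length w. if w ! j = x then y ^ count_list (drop (Suc j) w) x else 0)"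
    by (rule sum.cong) (auto simp: F_def)
  have "(\<Sum>j<length (c # w). F j) = qint y (count_list (c # w) x)"
    unfolding e e2 Cons by (simp add: qint_def F_def)
  then show ?case by (simp add: F_def)
qed

lemma prod_map_letters:
  fixes g :: "nat \<Rightarrow> 'a::comm_monoid_mult"
  assumes "set B \<subseteq> letters"
  shows "prod_list (map g B) = g 1 ^ count_list B 1 * g 2 ^ count_list B 2"
  using assms by (induction B) (auto simp: letters_def ac_simps)

lemma prod_ivl_drop:
  assumes lw: "length w = Suc n" and j: "j \<le> n"
  shows "(\<Prod>i\<in>{j..<n}. g (w ! Suc i)) = prod_list (map g (drop (Suc j) w))"
proof -
  have "drop (Suc j) w = map (\<lambda>i. w ! Suc i) [j..<n]"
    by (rule nth_equalityI) (use lw j in auto)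
  moreover have "(\<Prod>i\<in>{j..<n}. g (w ! Suc i)) = prod_list (map (\<lambda>i. g (w ! Suc i)) [j..<n])"
    using prod.distinct_set_conv_list[of "[j..<n]" "\<lambda>i. g (w ! Suc i)"] by simp
  ultimately show ?thesis by (simp add: comp_def)
qed



lemma pow_cancel:
  fixes a b :: "'a::comm_ring_1"
  assumes "a * b = 1"
  shows "a ^ (M + c) * b ^ (N + c + d) = a ^ M * b ^ N * b ^ d"
proof -
  have "a ^ (M + c) * b ^ (N + c + d) = a ^ M * b ^ N * b ^ d * (a * b) ^ c"
    by (simp add: power_add power_mult_distrib ac_simps)
  then show ?thesis using assms by simp
qed

lemma words_snoc:
  assumes "v \<in> words (Suc n)"
  obtains v0 x where "v = v0 @ [x]" "v0 \<in> words n" "x \<in> letters"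
proof -
  have "v \<noteq> []" using assms by (auto simp: words_def)
  then obtain v0 x where "v = v0 @ [x]" by (metis rev_exhaust)
  then show ?thesis using that assms by (auto simp: words_def)
qed

lemma count_letters: "set w \<subseteq> letters \<Longrightarrow> count_list w 1 + count_list w 2 = length w"
  by (induction w) (auto simp: letters_def)

lemma Sw_closed:
  fixes q :: "nat \<Rightarrow> nat \<Rightarrow> 'a::field"
  assumes ql: "q 1 2 * q 2 1 = 1"
  shows "w \<in> words n \<Longrightarrow> v \<in> words n \<Longrightarrow> Sw q n w v =
     (if count_list w 1 = count_list v 1 \<and> count_list w 2 = count_list v 2
      then q 1 2 ^ mm w * q 2 1 ^ mm v * qf (q 2 2) (count_list v 2) * qf (q 1 1) (count_list v 1) else 0)"
proof (induction n arbitrary: w v)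
  case 0
  then have "w = []" "v = []" by (auto simp: words_def)
  moreover have "{t. t permutes {..<0::nat}} = {id}" by auto
  ultimately show ?case by (simp add: Sw_def braid_coef_def permute_word_def)
next
  case (Suc n)
  obtain v0 x where v: "v = v0 @ [x]" "v0 \<in> words n" "x \<in> letters"
    using words_snoc[OF Suc.prems(2)] by blast
  have lw: "length w = Suc n" and wl: "set w \<subseteq> letters" using Suc.prems by (auto simp: words_def)
  let ?C = "count_list w 1 = count_list v 1 \<and> count_list w 2 = count_list v 2"
  let ?K0 = "qf (q 2 2) (count_list v0 2) * qf (q 1 1) (count_list v0 1)"
  have T: "(\<Prod>i\<in>{j..<n}. q (w ! j) (w ! Suc i)) * Sw q n (rem j w) v0 =
      (if ?C then q 1 2 ^ mm w * q 2 1 ^ mm v * ?K0 * (q x x) ^ count_list (drop (Suc j) w) x else 0)"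
    if j: "j \<le> n" and wj: "w ! j = x" for j
  proof -
    define A where "A = take j w"
    define B where "B = drop (Suc j) w"
    have wAB: "w = A @ x # B" using id_take_nth_drop[of j w] lw j wj by (simp add: A_def B_def)
    have remAB: "rem j w = A @ B" by (simp add: rem_def A_def B_def)
    have rw: "rem j w \<in> words n" using set_rem[of j w] wl lw j length_rem[of j w]
      by (auto simp: words_def)
    have BL: "set B \<subseteq> letters" using wl wAB by auto
    have R: "(\<Prod>i\<in>{j..<n}. q (w ! j) (w ! Suc i)) = q x 1 ^ count_list B 1 * q x 2 ^ count_list B 2"
      using prod_ivl_drop[OF lw j, of "q x"] prod_map_letters[OF BL, of "q x"] wj by (simp add: B_def)
    have Ceq: "(count_list (rem j w) 1 = count_list v0 1 \<and> count_list (rem j w) 2 = count_list v0 2) = ?C"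
    proof -
      have cA: "count_list w y = count_list A y + count_list B y + (if x = y then 1 else 0)" for y
        by (subst wAB) simp
      show ?thesis using v(1) cA unfolding remAB by auto
    qed
    have IH: "Sw q n (rem j w) v0 = (if ?C then q 1 2 ^ mm (A @ B) * q 2 1 ^ mm v0 * ?K0 else 0)"
      using Suc.IH[OF rw v(2)] Ceq remAB by simp
    show ?thesis
    proof (cases ?C)
      case False then show ?thesis by (simp only: IH if_not_P[OF False] if_False mult_zero_right)
    next
      case True
      have "x = 1 \<or> x = 2" using v(3) by (auto simp: letters_def)
      then show ?thesis
      proof
        assume x1: "x = 1"
        have mw: "mm w = mm A + mm B + count_list A 1 * count_list B 2 + count_list B 2"
          unfolding wAB x1 by (simp add: mm_append algebra_simps)
        have mv: "mm v = mm v0" unfolding v(1) x1 by (simp add: mm_append)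
        show ?thesis unfolding R IH using True
          by (simp add: x1 mw mv mm_append power_add ac_simps B_def[symmetric])
      next
        assume x2: "x = 2"
        have mw: "mm w = mm A + mm B + count_list A 1 * count_list B 2 + count_list A 1"
          unfolding wAB x2 by (simp add: mm_append algebra_simps)
        have c1: "count_list v0 1 = count_list A 1 + count_list B 1"
          using True unfolding v(1) wAB x2 by simp
        have mv: "mm v = mm v0 + count_list A 1 + count_list B 1"
          unfolding v(1) x2 using c1 by (simp add: mm_append)
        have pc: "q 1 2 ^ (mm (A @ B) + count_list A 1) * q 2 1 ^ (mm v0 + count_list A 1 + count_list B 1)
           = q 1 2 ^ mm (A @ B) * q 2 1 ^ mm v0 * q 2 1 ^ count_list B 1"
          by (rule pow_cancel[OF ql])
        have "mm w = mm (A @ B) + count_list A 1" using mw by (simp add: mm_append)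
        then show ?thesis unfolding R IH using True pc mv x2
          by (simp add: ac_simps B_def[symmetric])
      qed
    qed
  qed
  have "Sw q (Suc n) w v = (\<Sum>j\<le>n. if w ! j = x then (\<Prod>i\<in>{j..<n}. q (w ! j) (w ! Suc i)) * Sw q n (rem j w) v0 else 0)"
    using Sw_Suc[OF lw] v(1) by simp
  also have "\<dots> = (\<Sum>j\<le>n. if w ! j = x then (if ?C then q 1 2 ^ mm w * q 2 1 ^ mm v * ?K0 * (q x x) ^ count_list (drop (Suc j) w) x else 0) else 0)"
  proof (rule sum.cong[OF refl])
    fix j assume j: "j \<in> {..n}"
    show "(if w ! j = x then (\<Prod>i\<in>{j..<n}. q (w ! j) (w ! Suc i)) * Sw q n (rem j w) v0 else 0) =
      (if w ! j = x then (if ?C then q 1 2 ^ mm w * q 2 1 ^ mm v * ?K0 * (q x x) ^ count_list (drop (Suc j) w) x else 0) else 0)"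
    proof (cases "w ! j = x")
      case True
      show ?thesis unfolding if_P[OF True] by (rule T[OF _ True]) (use j in simp)
    next
      case False
      show ?thesis unfolding if_not_P[OF False] by (rule refl)
    qed
  qed
  also have "\<dots> = (if ?C then q 1 2 ^ mm w * q 2 1 ^ mm v * ?K0 *
        (\<Sum>j<length w. if w ! j = x then (q x x) ^ count_list (drop (Suc j) w) x else 0) else 0)"
  proof (cases ?C)
    case True
    have e: "{..n} = {..<length w}" using lw by auto
    have d: "\<And>j. (if w ! j = x then Kc * (q x x) ^ count_list (drop (Suc j) w) x else 0) =
       Kc * (if w ! j = x then (q x x) ^ count_list (drop (Suc j) w) x else 0)" for Kc :: 'a by simp
    show ?thesis unfolding if_P[OF True] e d by (rule sum_distrib_left[symmetric])
  next
    case False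
    show ?thesis unfolding if_not_P[OF False] by simp
  qed
  also have "\<dots> = (if ?C then q 1 2 ^ mm w * q 2 1 ^ mm v * ?K0 * qint (q x x) (count_list w x) else 0)"
    by (simp add: sum_pos_count)
  also have "\<dots> = (if ?C then q 1 2 ^ mm w * q 2 1 ^ mm v * qf (q 2 2) (count_list v 2) * qf (q 1 1) (count_list v 1) else 0)"
  proof (cases ?C)
    case True
    have "x = 1 \<or> x = 2" using v(3) by (auto simp: letters_def)
    then show ?thesis
    proof
      assume x1: "x = 1"
      have "count_list w 1 = Suc (count_list v0 1)" "count_list v 2 = count_list v0 2" "count_list v 1 = Suc (count_list v0 1)"
        using True unfolding v(1) x1 by auto
      then show ?thesis using True x1 by (simp add: qf_Suc ac_simps)
    next
      assume x2: "x = 2"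
      have "count_list w 2 = Suc (count_list v0 2)" "count_list v 1 = count_list v0 1" "count_list v 2 = Suc (count_list v0 2)"
        using True unfolding v(1) x2 by auto
      then show ?thesis using True x2 by (simp add: qf_Suc ac_simps)
    qed
  next
    case False
    show ?thesis unfolding if_not_P[OF False] by (rule refl)
  qed
  finally show ?case .
qed



lemma finite_words: "finite (words n)"
proof -
  have "finite {xs. set xs \<subseteq> letters \<and> length xs = n}"
    by (rule finite_lists_length_eq) (simp add: letters_def)
  then show ?thesis unfolding words_def by (simp add: conj_commute)
qed

definition Wd :: "nat \<Rightarrow> nat \<Rightarrow> nat list set" where
  "Wd a b = {w. set w \<subseteq> letters \<and> count_list w 2 = a \<and> count_list w 1 = b}"

lemma Wd_sub: "Wd a b \<subseteq> words (a + b)"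
  using count_letters by (fastforce simp: Wd_def words_def)

lemma finite_Wd: "finite (Wd a b)"
  using finite_subset[OF Wd_sub finite_words] .

definition Phi :: "(nat \<Rightarrow> nat \<Rightarrow> 'a::field) \<Rightarrow> 'a tens \<Rightarrow> nat \<Rightarrow> nat \<Rightarrow> 'a" where
  "Phi q f a b = (\<Sum>w\<in>Wd a b. f w * q 1 2 ^ mm w)"

definition Kc :: "(nat \<Rightarrow> nat \<Rightarrow> 'a::field) \<Rightarrow> nat \<Rightarrow> nat \<Rightarrow> 'a" where
  "Kc q a b = qf (q 2 2) a * qf (q 1 1) b"

lemma pw_words:
  assumes w: "w \<in> words n" and t: "t permutes {..<n}"
  shows "permute_word n t w \<in> words n"
proof -
  have "\<And>p. p < n \<Longrightarrow> t p < n" using permutes_in_image[OF t] by simp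
  then have "\<And>p. p < n \<Longrightarrow> w ! t p \<in> letters" using w by (auto simp: words_def)
  then show ?thesis by (auto simp: words_def permute_word_def)
qed

lemma Sw_not_words:
  assumes w: "w \<in> words n" and v: "v \<notin> words n"
  shows "Sw q n w v = 0"
  unfolding Sw_def using pw_words[OF w] v by (intro sum.neutral) auto

lemma ideal_crit:
  fixes q :: "nat \<Rightarrow> nat \<Rightarrow> 'a::field"
  assumes ql: "q 1 2 * q 2 1 = 1" and f: "f \<in> tensor_alg"
    and z: "\<And>a b. Kc q a b \<noteq> 0 \<Longrightarrow> Phi q f a b = 0"
  shows "f \<in> nichols_ideal q"
  unfolding nichols_ideal_def
proof (intro CollectI conjI allI f)
  fix n
  show "symmetrizer q n f = tzero"
  proof
    fix v
    show "symmetrizer q n f v = tzero v"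
    proof (cases "v \<in> words n")
      case False
      then show ?thesis unfolding symmetrizer_Sw tzero_def
      proof (intro sum.neutral ballI)
        fix w assume "w \<in> words n"
        then show "f w * Sw q n w v = 0" using Sw_not_words[OF _ False, of w q] by simp
      qed
    next
      case True
      define a where "a = count_list v 2"
      define b where "b = count_list v 1"
      have ab: "a + b = n" using count_letters[of v] True by (auto simp: words_def a_def b_def)
      let ?P = "\<lambda>w. count_list w 1 = count_list v 1 \<and> count_list w 2 = count_list v 2"
      have "symmetrizer q n f v = (\<Sum>w\<in>words n. f w * (if ?P w then
            q 1 2 ^ mm w * q 2 1 ^ mm v * qf (q 2 2) (count_list v 2) * qf (q 1 1) (count_list v 1) else 0))"
        unfolding symmetrizer_Sw using Sw_closed[OF ql _ True] by (intro sum.cong) auto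
      also have "\<dots> = (\<Sum>w\<in>words n. if ?P w then (q 2 1 ^ mm v * Kc q a b) * (f w * q 1 2 ^ mm w) else 0)"
        by (intro sum.cong) (auto simp: Kc_def a_def b_def ac_simps)
      also have "\<dots> = (\<Sum>w\<in>{w\<in>words n. ?P w}. (q 2 1 ^ mm v * Kc q a b) * (f w * q 1 2 ^ mm w))"
        by (rule sum.inter_filter[symmetric, OF finite_words])
      also have "{w\<in>words n. ?P w} = Wd a b"
      proof (rule set_eqI, rule iffI)
        fix x assume "x \<in> {w\<in>words n. ?P w}"
        then show "x \<in> Wd a b" by (auto simp: Wd_def words_def a_def b_def)
      next
        fix x assume x: "x \<in> Wd a b"
        then have "length x = a + b" using count_letters[of x] by (auto simp: Wd_def)
        then show "x \<in> {w\<in>words n. ?P w}" using x ab by (auto simp: Wd_def words_def a_def b_def)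
      qed
      also have "(\<Sum>w\<in>Wd a b. (q 2 1 ^ mm v * Kc q a b) * (f w * q 1 2 ^ mm w)) =
          (q 2 1 ^ mm v * Kc q a b) * Phi q f a b"
        by (simp add: Phi_def sum_distrib_left)
      also have "\<dots> = 0" using z[of a b] by (cases "Kc q a b = 0") auto
      finally show ?thesis by (simp add: tzero_def)
    qed
  qed
qed



lemma Phi_mult:
  fixes q :: "nat \<Rightarrow> nat \<Rightarrow> 'a::field"
  shows "Phi q (tmult f g) a b = (\<Sum>a1\<le>a. \<Sum>b1\<le>b.
     q 1 2 ^ (b1 * (a - a1)) * Phi q f a1 b1 * Phi q g (a - a1) (b - b1))"
proof -
  let ?Q = "q 1 2"
  let ?S1 = "Sigma (Wd a b) (\<lambda>w. {..length w})"
  let ?S2 = "Sigma ({..a} \<times> {..b}) (\<lambda>p. Wd (fst p) (snd p) \<times> Wd (a - fst p) (b - snd p))"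
  let ?h = "\<lambda>(w, k). ((count_list (take k w) 2, count_list (take k w) 1), (take k w, drop k w))"
  let ?F = "\<lambda>u u'. f u * g u' * ?Q ^ mm (u @ u')"
  let ?G = "\<lambda>(p, (u, u')). ?F u u'"
  have fin1: "finite ?S1" using finite_Wd by auto
  have "Phi q (tmult f g) a b = (\<Sum>w\<in>Wd a b. \<Sum>k\<le>length w. f (take k w) * g (drop k w) * ?Q ^ mm w)"
    by (simp add: Phi_def tmult_def sum_distrib_right)
  also have "\<dots> = (\<Sum>(w, k)\<in>?S1. f (take k w) * g (drop k w) * ?Q ^ mm w)"
    by (rule sum.Sigma) (auto simp: finite_Wd)
  also have "\<dots> = (\<Sum>x\<in>?S1. ?G (?h x))"
    by (rule sum.cong) auto
  also have "\<dots> = (\<Sum>x\<in>?S2. ?G x)"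
  proof (rule sum.reindex_bij_betw)
    show "bij_betw ?h ?S1 ?S2"
    proof (rule bij_betw_byWitness[where f' = "\<lambda>(p, (u, u')). (u @ u', length u)"])
      show "\<forall>x\<in>?S1. (\<lambda>(p, (u, u')). (u @ u', length u)) (?h x) = x" by auto
      show "\<forall>y\<in>?S2. ?h ((\<lambda>(p, (u, u')). (u @ u', length u)) y) = y" by (auto simp: Wd_def)
      show "?h ` ?S1 \<subseteq> ?S2"
      proof
        fix y assume "y \<in> ?h ` ?S1"
        then obtain w k where wk: "w \<in> Wd a b" "k \<le> length w" "y = ?h (w, k)" by auto
        have c: "count_list w x = count_list (take k w) x + count_list (drop k w) x" for x
          by (metis append_take_drop_id count_list_append)
        have "set (take k w) \<subseteq> letters" "set (drop k w) \<subseteq> letters" using wk(1)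
          by (auto simp: Wd_def dest: in_set_takeD in_set_dropD)
        then show "y \<in> ?S2" using wk c[of 1] c[of 2] by (auto simp: Wd_def)
      qed
      show "(\<lambda>(p, (u, u')). (u @ u', length u)) ` ?S2 \<subseteq> ?S1"
        by (auto simp: Wd_def)
    qed
  qed
  also have "\<dots> = (\<Sum>p\<in>{..a} \<times> {..b}. \<Sum>(u, u')\<in>Wd (fst p) (snd p) \<times> Wd (a - fst p) (b - snd p). ?F u u')"
    by (rule sum.Sigma[symmetric]) (auto simp: finite_Wd)
  also have "\<dots> = (\<Sum>p\<in>{..a} \<times> {..b}.
      ?Q ^ (snd p * (a - fst p)) * Phi q f (fst p) (snd p) * Phi q g (a - fst p) (b - snd p))"
  proof (rule sum.cong[OF refl])
    fix p assume "p \<in> {..a} \<times> {..b}"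
    have "(\<Sum>(u, u')\<in>Wd (fst p) (snd p) \<times> Wd (a - fst p) (b - snd p). ?F u u') =
      (\<Sum>u\<in>Wd (fst p) (snd p). \<Sum>u'\<in>Wd (a - fst p) (b - snd p). ?F u u')"
      by (rule sum.cartesian_product[symmetric])
    also have "\<dots> = (\<Sum>u\<in>Wd (fst p) (snd p). \<Sum>u'\<in>Wd (a - fst p) (b - snd p).
        ?Q ^ (snd p * (a - fst p)) * (f u * ?Q ^ mm u) * (g u' * ?Q ^ mm u'))"
      by (intro sum.cong refl) (auto simp: Wd_def mm_append power_add ac_simps)
    also have "\<dots> = ?Q ^ (snd p * (a - fst p)) * Phi q f (fst p) (snd p) * Phi q g (a - fst p) (b - snd p)"
      by (simp add: Phi_def sum_distrib_left sum_distrib_right ac_simps)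
    finally show "(\<Sum>(u, u')\<in>Wd (fst p) (snd p) \<times> Wd (a - fst p) (b - snd p). ?F u u') =
      ?Q ^ (snd p * (a - fst p)) * Phi q f (fst p) (snd p) * Phi q g (a - fst p) (b - snd p)" .
  qed
  also have "\<dots> = (\<Sum>a1\<le>a. \<Sum>b1\<le>b.
     ?Q ^ (b1 * (a - a1)) * Phi q f a1 b1 * Phi q g (a - a1) (b - b1))"
    by (simp add: sum.cartesian_product split_def)
  finally show ?thesis .
qed



lemma Phi_add: "Phi q (tadd f g) a b = Phi q f a b + Phi q g a b"
  by (simp add: Phi_def tadd_def sum.distrib distrib_right)

lemma Phi_smult: "Phi q (tsmult c f) a b = c * Phi q f a b"
  by (simp add: Phi_def tsmult_def sum_distrib_left ac_simps)

lemma Phi_diff: "Phi q (\<lambda>w. f w - g w) a b = Phi q f a b - Phi q g a b"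
  by (simp add: Phi_def sum_subtractf left_diff_distrib)

lemma Phi_lin_sum:
  "Phi q (\<lambda>w. \<Sum>d\<in>D. c d * e d w) a b = (\<Sum>d\<in>D. c d * Phi q (e d) a b)"
  unfolding Phi_def by (simp add: sum_distrib_right sum_distrib_left ac_simps sum.swap[of _ D])

lemma Phi_mono: "Phi q (mono u) a b = (if u \<in> Wd a b then q 1 2 ^ mm u else 0)"
proof -
  have "Phi q (mono u) a b = (\<Sum>w\<in>Wd a b. if w = u then q 1 2 ^ mm w else 0)"
    unfolding Phi_def mono_def by (intro sum.cong refl) simp
  also have "\<dots> = (if u \<in> Wd a b then q 1 2 ^ mm u else 0)"
    by (rule sum.delta[OF finite_Wd])
  finally show ?thesis .
qed

lemma sum_atMost_reflect: fixes a :: nat shows "(\<Sum>i\<le>a. h i) = (\<Sum>i\<le>a. h (a - i))"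
  by (rule sum.reindex_bij_witness[of _ "\<lambda>i. a - i" "\<lambda>i. a - i"]) (simp_all add: diff_diff_cancel)

lemma sum2_reflect: fixes a b :: nat shows "(\<Sum>i\<le>a. \<Sum>j\<le>b. h i j) = (\<Sum>i\<le>a. \<Sum>j\<le>b. h (a - i) (b - j))"
proof -
  have "(\<Sum>i\<le>a. \<Sum>j\<le>b. h i j) = (\<Sum>i\<le>a. \<Sum>j\<le>b. h (a - i) j)"
    by (rule sum_atMost_reflect)
  also have "\<dots> = (\<Sum>i\<le>a. \<Sum>j\<le>b. h (a - i) (b - j))"
    by (rule sum.cong[OF refl]) (rule sum_atMost_reflect)
  finally show ?thesis .
qed

lemma sum2_delta: fixes a b a1 b1 :: nat and K :: "'b::comm_monoid_add" shows "(\<Sum>x\<le>a. \<Sum>y\<le>b. if x = a1 \<and> y = b1 then K else 0) = (if a1 \<le> a \<and> b1 \<le> b then K else 0)"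
proof -
  have "(\<Sum>y\<le>b. if x = a1 \<and> y = b1 then K else 0) = (if x = a1 then (if b1 \<le> b then K else 0) else 0)" for x
    by (cases "x = a1") (simp_all add: sum.delta)
  then have "(\<Sum>x\<le>a. \<Sum>y\<le>b. if x = a1 \<and> y = b1 then K else 0) = (\<Sum>x\<le>a. if x = a1 then (if b1 \<le> b then K else 0) else 0)"
    by simp
  also have "\<dots> = (if a1 \<le> a \<and> b1 \<le> b then K else 0)" by (simp add: sum.delta)
  finally show ?thesis .
qed

lemma Phi_comm:
  fixes q :: "nat \<Rightarrow> nat \<Rightarrow> 'a::field"
  shows "Phi q (tcomm f g) a b = (\<Sum>a1\<le>a. \<Sum>b1\<le>b.
     (q 1 2 ^ (b1 * (a - a1)) - q 1 2 ^ ((b - b1) * a1)) * Phi q f a1 b1 * Phi q g (a - a1) (b - b1))"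
proof -
  have t: "tcomm f g = (\<lambda>w. tmult f g w - tmult g f w)" by (simp add: tcomm_def)
  have "Phi q (tmult g f) a b = (\<Sum>a1\<le>a. \<Sum>b1\<le>b.
     q 1 2 ^ (b1 * (a - a1)) * Phi q g a1 b1 * Phi q f (a - a1) (b - b1))"
    by (rule Phi_mult)
  also have "\<dots> = (\<Sum>a1\<le>a. \<Sum>b1\<le>b.
     q 1 2 ^ ((b - b1) * (a - (a - a1))) * Phi q g (a - a1) (b - b1) * Phi q f (a - (a - a1)) (b - (b - b1)))"
    by (rule sum2_reflect)
  also have "\<dots> = (\<Sum>a1\<le>a. \<Sum>b1\<le>b.
     q 1 2 ^ ((b - b1) * a1) * Phi q f a1 b1 * Phi q g (a - a1) (b - b1))"
    by (intro sum.cong refl) (simp add: diff_diff_cancel ac_simps)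
  finally have 2: "Phi q (tmult g f) a b = \<dots>" .
  have "Phi q (tcomm f g) a b = Phi q (tmult f g) a b - Phi q (tmult g f) a b"
    unfolding t by (rule Phi_diff)
  also have "\<dots> = (\<Sum>a1\<le>a. \<Sum>b1\<le>b. q 1 2 ^ (b1 * (a - a1)) * Phi q f a1 b1 * Phi q g (a - a1) (b - b1))
     - (\<Sum>a1\<le>a. \<Sum>b1\<le>b. q 1 2 ^ ((b - b1) * a1) * Phi q f a1 b1 * Phi q g (a - a1) (b - b1))"
    by (subst 2, subst Phi_mult, rule refl)
  also have "\<dots> = (\<Sum>a1\<le>a. \<Sum>b1\<le>b.
     (q 1 2 ^ (b1 * (a - a1)) - q 1 2 ^ ((b - b1) * a1)) * Phi q f a1 b1 * Phi q g (a - a1) (b - b1))"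
    by (simp only: left_diff_distrib sum_subtractf)
  finally show ?thesis .
qed

definition Allowed :: "'a::field \<Rightarrow> nat \<Rightarrow> nat \<Rightarrow> bool" where
  "Allowed Q a b = ((a = 1 \<and> b = 0) \<or> (a = 0 \<and> b = 1) \<or> (a \<ge> 1 \<and> b \<ge> 1 \<and> \<not> (Q ^ a = 1 \<and> Q ^ b = 1)))"

lemma coef_zero:
  fixes Q :: "'a::field"
  assumes Q: "Q \<noteq> 0" and na: "\<not> Allowed Q a b" and a1: "a1 \<le> a" and b1: "b1 \<le> b"
  shows "Q ^ (b1 * (a - a1)) - Q ^ ((b - b1) * a1) = 0"
proof -
  have "b = 0 \<or> a = 0 \<or> (a \<ge> 1 \<and> b \<ge> 1 \<and> Q ^ a = 1 \<and> Q ^ b = 1)"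
    using na by (auto simp: Allowed_def)
  then consider "b = 0" | "a = 0" | "a \<ge> 1" "b \<ge> 1" "Q ^ a = 1" "Q ^ b = 1"
    by blast
  then show ?thesis
  proof cases
    case 1 then show ?thesis using b1 by simp
  next
    case 2 then show ?thesis using a1 by simp
  next
    case 3
    have e1: "Q ^ (b1 * (a - a1)) * Q ^ (b1 * a1) = 1"
    proof -
      have "Q ^ (b1 * (a - a1)) * Q ^ (b1 * a1) = (Q ^ a) ^ b1"
        using a1 by (simp add: power_add[symmetric] power_mult[symmetric] algebra_simps)
      then show ?thesis using 3 by simp
    qed
    have e2: "Q ^ ((b - b1) * a1) * Q ^ (b1 * a1) = 1"
    proof -
      have "Q ^ ((b - b1) * a1) * Q ^ (b1 * a1) = (Q ^ b) ^ a1"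
        using b1 by (simp add: power_add[symmetric] power_mult[symmetric] algebra_simps)
      then show ?thesis using 3 by simp
    qed
    have "Q ^ (b1 * a1) \<noteq> 0" using Q by simp
    then have "Q ^ (b1 * (a - a1)) = Q ^ ((b - b1) * a1)" using e1 e2
      by (metis mult_right_cancel)
    then show ?thesis by simp
  qed
qed

lemma lie_allowed:
  fixes q :: "nat \<Rightarrow> nat \<Rightarrow> 'a::field"
  assumes Q: "q 1 2 \<noteq> 0"
  shows "g \<in> lie_gen \<Longrightarrow> \<not> Allowed (q 1 2) a b \<Longrightarrow> Phi q g a b = 0"
proof (induction g arbitrary: a b rule: lie_gen.induct)
  case (gen i)
  then show ?case
    by (auto simp: gen_def Phi_mono Wd_def letters_def Allowed_def)
next
  case (add x y) then show ?case by (simp add: Phi_add)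
next
  case (smult x c) then show ?case by (simp add: Phi_smult)
next
  case (comm x y)
  show ?case unfolding Phi_comm
    using coef_zero[OF Q comm.prems] by (intro sum.neutral ballI) auto
qed

definition Hom :: "(nat \<Rightarrow> nat \<Rightarrow> 'a::field) \<Rightarrow> 'a tens \<Rightarrow> nat \<Rightarrow> nat \<Rightarrow> 'a \<Rightarrow> bool" where
  "Hom q f a b c = (\<forall>a' b'. Phi q f a' b' = (if a' = a \<and> b' = b then c else 0))"

lemma Hom_comm:
  fixes q :: "nat \<Rightarrow> nat \<Rightarrow> 'a::field"
  assumes f: "Hom q f a1 b1 c" and g: "Hom q g a2 b2 d"
  shows "Hom q (tcomm f g) (a1 + a2) (b1 + b2) ((q 1 2 ^ (b1 * a2) - q 1 2 ^ (a1 * b2)) * c * d)"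
  unfolding Hom_def
proof (intro allI)
  fix a b
  let ?Q = "q 1 2"
  have "Phi q (tcomm f g) a b = (\<Sum>x\<le>a. \<Sum>y\<le>b. (if x = a1 \<and> y = b1 then
     (?Q ^ (b1 * (a - a1)) - ?Q ^ ((b - b1) * a1)) * c * (if a - a1 = a2 \<and> b - b1 = b2 then d else 0) else 0))"
    unfolding Phi_comm using f g by (intro sum.cong refl) (auto simp: Hom_def)
  also have "\<dots> = (if a1 \<le> a \<and> b1 \<le> b then
     (?Q ^ (b1 * (a - a1)) - ?Q ^ ((b - b1) * a1)) * c * (if a - a1 = a2 \<and> b - b1 = b2 then d else 0) else 0)"
    by (rule sum2_delta)
  also have "\<dots> = (if a = a1 + a2 \<and> b = b1 + b2 then (?Q ^ (b1 * a2) - ?Q ^ (a1 * b2)) * c * d else 0)"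
    by (cases "a = a1 + a2 \<and> b = b1 + b2") (auto simp: ac_simps)
  finally show "Phi q (tcomm f g) a b = (if a = a1 + a2 \<and> b = b1 + b2 then (?Q ^ (b1 * a2) - ?Q ^ (a1 * b2)) * c * d else 0)" .
qed

lemma Hom_gen1: "Hom q (gen 1) 0 1 1"
  by (auto simp: Hom_def gen_def Phi_mono Wd_def letters_def)

lemma Hom_gen2: "Hom q (gen 2) 1 0 1"
  by (auto simp: Hom_def gen_def Phi_mono Wd_def letters_def)

lemma iter_right:
  fixes q :: "nat \<Rightarrow> nat \<Rightarrow> 'a::field"
  assumes "l \<in> lie_gen" "Hom q l a b c"
  shows "\<exists>l'\<in>lie_gen. Hom q l' a (b + k) (c * (1 - q 1 2 ^ a) ^ k)"
proof (induction k)
  case 0 then show ?case using assms by auto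
next
  case (Suc k)
  then obtain l' where l': "l' \<in> lie_gen" "Hom q l' a (b + k) (c * (1 - q 1 2 ^ a) ^ k)" by blast
  have "Hom q (tcomm l' (gen 1)) (a + 0) (b + k + 1) ((q 1 2 ^ ((b + k) * 0) - q 1 2 ^ (a * 1)) * (c * (1 - q 1 2 ^ a) ^ k) * 1)"
    by (rule Hom_comm[OF l'(2) Hom_gen1])
  moreover have "tcomm l' (gen 1) \<in> lie_gen" using lie_gen.comm[OF l'(1) lie_gen.gen[of 1]] by (simp add: letters_def)
  ultimately show ?case by (auto simp: ac_simps)
qed

lemma iter_left:
  fixes q :: "nat \<Rightarrow> nat \<Rightarrow> 'a::field"
  assumes "l \<in> lie_gen" "Hom q l a b c"
  shows "\<exists>l'\<in>lie_gen. Hom q l' (a + k) b (c * (1 - q 1 2 ^ b) ^ k)"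
proof (induction k)
  case 0 then show ?case using assms by auto
next
  case (Suc k)
  then obtain l' where l': "l' \<in> lie_gen" "Hom q l' (a + k) b (c * (1 - q 1 2 ^ b) ^ k)" by blast
  have "Hom q (tcomm (gen 2) l') (1 + (a + k)) (0 + b) ((q 1 2 ^ (0 * (a + k)) - q 1 2 ^ (1 * b)) * 1 * (c * (1 - q 1 2 ^ b) ^ k))"
    by (rule Hom_comm[OF Hom_gen2 l'(2)])
  moreover have "tcomm (gen 2) l' \<in> lie_gen" using lie_gen.comm[OF lie_gen.gen[of 2] l'(1)] by (simp add: letters_def)
  ultimately show ?case by (auto simp: ac_simps)
qed

lemma construct:
  fixes q :: "nat \<Rightarrow> nat \<Rightarrow> 'a::field"
  assumes a: "a \<ge> 1" and b: "b \<ge> 1" and nd: "\<not> (q 1 2 ^ a = 1 \<and> q 1 2 ^ b = 1)"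
  shows "\<exists>l\<in>lie_gen. \<exists>c. c \<noteq> 0 \<and> Hom q l a b c"
proof -
  let ?Q = "q 1 2"
  have g1: "gen 1 \<in> lie_gen" "gen 2 \<in> lie_gen" using lie_gen.gen[of 1] lie_gen.gen[of 2] by (simp_all add: letters_def)
  show ?thesis
  proof (cases "?Q ^ b = 1")
    case False
    then have Q1: "?Q \<noteq> 1" by auto
    obtain l1 where l1: "l1 \<in> lie_gen" "Hom q l1 1 (0 + b) (1 * (1 - ?Q ^ 1) ^ b)"
      using iter_right[OF g1(2) Hom_gen2, where k = b] by blast
    obtain l2 where l2: "l2 \<in> lie_gen" "Hom q l2 (1 + (a - 1)) (0 + b) (1 * (1 - ?Q ^ 1) ^ b * (1 - ?Q ^ (0 + b)) ^ (a - 1))"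
      using iter_left[OF l1, where k = "a - 1"] by blast
    define c0 where "c0 = 1 * (1 - ?Q ^ 1) ^ b * (1 - ?Q ^ (0 + b)) ^ (a - 1)"
    have e: "1 + (a - 1) = a" "0 + b = b" using a by simp_all
    have h: "Hom q l2 a b c0" using l2(2) unfolding c0_def e .
    have "c0 \<noteq> 0" unfolding c0_def using False Q1 by simp
    then show ?thesis using l2(1) h by blast
  next
    case True
    then have F: "?Q ^ a \<noteq> 1" using nd by auto
    then have Q1: "?Q \<noteq> 1" by auto
    obtain l1 where l1: "l1 \<in> lie_gen" "Hom q l1 (0 + a) 1 (1 * (1 - ?Q ^ 1) ^ a)"
      using iter_left[OF g1(1) Hom_gen1, where k = a] by blast
    obtain l2 where l2: "l2 \<in> lie_gen" "Hom q l2 (0 + a) (1 + (b - 1)) (1 * (1 - ?Q ^ 1) ^ a * (1 - ?Q ^ (0 + a)) ^ (b - 1))"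
      using iter_right[OF l1, where k = "b - 1"] by blast
    define c0 where "c0 = 1 * (1 - ?Q ^ 1) ^ a * (1 - ?Q ^ (0 + a)) ^ (b - 1)"
    have e: "1 + (b - 1) = b" "0 + a = a" using b by simp_all
    have h: "Hom q l2 a b c0" using l2(2) unfolding c0_def e .
    have "c0 \<noteq> 0" unfolding c0_def using F Q1 by simp
    then show ?thesis using l2(1) h by blast
  qed
qed



section \<open>Closure properties\<close>

lemma ta_add: "f \<in> tensor_alg \<Longrightarrow> g \<in> tensor_alg \<Longrightarrow> tadd f g \<in> tensor_alg"
proof -
  assume f: "f \<in> tensor_alg" and g: "g \<in> tensor_alg"
  have "{w. tadd f g w \<noteq> 0} \<subseteq> {w. f w \<noteq> 0} \<union> {w. g w \<noteq> 0}" by (auto simp: tadd_def)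
  moreover have "finite ({w. f w \<noteq> 0} \<union> {w. g w \<noteq> 0})" using f g by (simp add: tensor_alg_def)
  ultimately have "finite {w. tadd f g w \<noteq> 0}" by (rule finite_subset)
  moreover have "\<forall>w. tadd f g w \<noteq> 0 \<longrightarrow> set w \<subseteq> letters"
  proof (intro allI impI)
    fix w assume "tadd f g w \<noteq> 0"
    then have "f w \<noteq> 0 \<or> g w \<noteq> 0" by (auto simp: tadd_def)
    then show "set w \<subseteq> letters" using f g by (auto simp: tensor_alg_def)
  qed
  ultimately show ?thesis by (simp add: tensor_alg_def)
qed

lemma ta_smult: "f \<in> tensor_alg \<Longrightarrow> tsmult c f \<in> tensor_alg"
proof -
  assume f: "f \<in> tensor_alg"
  have "{w. tsmult c f w \<noteq> 0} \<subseteq> {w. f w \<noteq> 0}" by (auto simp: tsmult_def)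
  then have "finite {w. tsmult c f w \<noteq> 0}" using f finite_subset by (auto simp: tensor_alg_def)
  moreover have "\<forall>w. tsmult c f w \<noteq> 0 \<longrightarrow> set w \<subseteq> letters"
    using f by (auto simp: tensor_alg_def tsmult_def)
  ultimately show ?thesis by (simp add: tensor_alg_def)
qed

lemma ta_diff: "f \<in> tensor_alg \<Longrightarrow> g \<in> tensor_alg \<Longrightarrow> (\<lambda>w. f w - g w) \<in> tensor_alg"
proof -
  assume f: "f \<in> tensor_alg" and g: "g \<in> tensor_alg"
  have "(\<lambda>w. f w - g w) = tadd f (tsmult (-1) g)" by (simp add: tadd_def tsmult_def)
  then show ?thesis using ta_add[OF f ta_smult[OF g]] by simp
qed

lemma ta_mult: "f \<in> tensor_alg \<Longrightarrow> g \<in> tensor_alg \<Longrightarrow> tmult f g \<in> tensor_alg"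
proof -
  assume f: "f \<in> tensor_alg" and g: "g \<in> tensor_alg"
  have ex: "\<exists>k. f (take k w) \<noteq> 0 \<and> g (drop k w) \<noteq> 0" if "tmult f g w \<noteq> 0" for w
  proof (rule ccontr)
    assume "\<not> ?thesis"
    then have "tmult f g w = 0" unfolding tmult_def by (intro sum.neutral) auto
    then show False using that by simp
  qed
  have "{w. tmult f g w \<noteq> 0} \<subseteq> (\<lambda>(u, u'). u @ u') ` ({u. f u \<noteq> 0} \<times> {u. g u \<noteq> 0})"
  proof
    fix w assume "w \<in> {w. tmult f g w \<noteq> 0}"
    then obtain k where k: "f (take k w) \<noteq> 0" "g (drop k w) \<noteq> 0" using ex by blast
    then show "w \<in> (\<lambda>(u, u'). u @ u') ` ({u. f u \<noteq> 0} \<times> {u. g u \<noteq> 0})"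
      by (intro image_eqI[of _ _ "(take k w, drop k w)"]) auto
  qed
  moreover have "finite ((\<lambda>(u, u'). u @ u') ` ({u. f u \<noteq> 0} \<times> {u. g u \<noteq> 0}))"
    using f g by (simp add: tensor_alg_def)
  ultimately have "finite {w. tmult f g w \<noteq> 0}" by (rule finite_subset)
  moreover have "\<forall>w. tmult f g w \<noteq> 0 \<longrightarrow> set w \<subseteq> letters"
  proof (intro allI impI)
    fix w assume "tmult f g w \<noteq> 0"
    then obtain k where k: "f (take k w) \<noteq> 0" "g (drop k w) \<noteq> 0" using ex by blast
    then have "set (take k w) \<subseteq> letters" "set (drop k w) \<subseteq> letters" using f g by (auto simp: tensor_alg_def)
    then show "set w \<subseteq> letters" using append_take_drop_id[of k w] by (metis set_append Un_subset_iff)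
  qed
  ultimately show ?thesis by (simp add: tensor_alg_def)
qed

lemma ta_comm: "f \<in> tensor_alg \<Longrightarrow> g \<in> tensor_alg \<Longrightarrow> tcomm f g \<in> tensor_alg"
  using ta_diff[OF ta_mult ta_mult] by (simp add: tcomm_def)

lemma ta_mono: "set u \<subseteq> letters \<Longrightarrow> mono u \<in> tensor_alg"
proof -
  assume u: "set u \<subseteq> letters"
  have "{w. mono u w \<noteq> (0::'a)} \<subseteq> {u}" by (auto simp: mono_def)
  then have "finite {w. mono u w \<noteq> (0::'a)}" using finite_subset by blast
  then show "mono u \<in> tensor_alg" using u by (auto simp: tensor_alg_def mono_def)
qed

lemma lie_ta: "g \<in> lie_gen \<Longrightarrow> g \<in> tensor_alg"
proof (induction rule: lie_gen.induct)
  case (gen i) then show ?case unfolding gen_def by (intro ta_mono) simp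
next
  case (add a b) then show ?case by (simp add: ta_add)
next
  case (smult a c) then show ?case by (simp add: ta_smult)
next
  case (comm a b) then show ?case by (simp add: ta_comm)
qed

lemma span_ta: assumes "S \<subseteq> tensor_alg" shows "x \<in> tspan S \<Longrightarrow> x \<in> tensor_alg"
proof (induction rule: tspan.induct)
  case zero then show ?case by (simp add: tensor_alg_def tzero_def)
next
  case (step a s c) then show ?case using ta_add ta_smult assms by blast
qed

lemma sym_add: "symmetrizer q n (tadd f g) = (\<lambda>v. symmetrizer q n f v + symmetrizer q n g v)"
  by (simp add: symmetrizer_def tadd_def distrib_right sum.distrib)

lemma sym_smult: "symmetrizer q n (tsmult c f) = (\<lambda>v. c * symmetrizer q n f v)"
  by (simp add: symmetrizer_def tsmult_def sum_distrib_left mult.assoc)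

lemma I_add: "f \<in> nichols_ideal q \<Longrightarrow> g \<in> nichols_ideal q \<Longrightarrow> tadd f g \<in> nichols_ideal q"
  by (auto simp: nichols_ideal_def ta_add sym_add tzero_def)

lemma I_smult: "f \<in> nichols_ideal q \<Longrightarrow> tsmult c f \<in> nichols_ideal q"
  by (auto simp: nichols_ideal_def ta_smult sym_smult tzero_def)

lemma I_zero: "tzero \<in> nichols_ideal q"
proof -
  have "tzero = tsmult 0 (tzero :: 'a tens)" by (simp add: tzero_def tsmult_def)
  moreover have "symmetrizer q n (tsmult 0 tzero) = tzero" for n by (simp add: sym_smult tzero_def)
  ultimately show ?thesis by (simp add: nichols_ideal_def tensor_alg_def tzero_def)
qed

section \<open>Orders\<close>

lemma ordr_enat:
  assumes "ordr y = enat N"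
  shows "N > 0" "y ^ N = 1" "\<And>m. 0 < m \<Longrightarrow> m < N \<Longrightarrow> y ^ m \<noteq> 1"
proof -
  have ex: "\<exists>n>0. y ^ n = 1" using assms by (auto simp: ordr_def split: if_splits)
  then have N: "N = (LEAST n. n > 0 \<and> y ^ n = 1)" using assms by (simp add: ordr_def)
  show "N > 0" "y ^ N = 1" using LeastI_ex[OF ex] N by auto
  show "\<And>m. 0 < m \<Longrightarrow> m < N \<Longrightarrow> y ^ m \<noteq> 1" using not_less_Least N by blast
qed

lemma ord_dvd_iff:
  fixes y :: "'a::field"
  assumes k: "k > 0"
  shows "ord_dvd y k \<longleftrightarrow> y ^ k = 1"
proof (cases "\<exists>n>0. y ^ n = 1")
  case False
  then have o: "ordr y = \<infinity>" by (simp add: ordr_def)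
  have "y ^ k \<noteq> 1" using False k by blast
  then show ?thesis using o by (simp add: ord_dvd_def)
next
  case True
  then obtain N where oN: "ordr y = enat N" by (simp add: ordr_def)
  note o = ordr_enat[OF oN]
  show ?thesis
  proof
    assume "ord_dvd y k"
    then have "N dvd k" using oN by (auto simp: ord_dvd_def)
    then obtain m where "k = N * m" by blast
    then show "y ^ k = 1" using o(2) by (simp add: power_mult)
  next
    assume yk: "y ^ k = 1"
    have "k = N * (k div N) + k mod N" by simp
    then have "y ^ k = (y ^ N) ^ (k div N) * y ^ (k mod N)" by (metis power_add power_mult)
    then have "y ^ (k mod N) = 1" using yk o(2) by simp
    then have "k mod N = 0" using o(3)[of "k mod N"] o(1) by (meson mod_less_divisor not_gr0)
    then show "ord_dvd y k" using oN by (auto simp: ord_dvd_def)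
  qed
qed

lemma qf_bound:
  fixes y :: "'a::field"
  assumes nz: "qf y k \<noteq> 0"
  shows "enat k < Nbound y"
proof (rule ccontr)
  assume nk: "\<not> enat k < Nbound y"
  then have c: "1 < ordr y \<and> ordr y < \<infinity>" by (auto simp: Nbound_def split: if_splits)
  then obtain N where oN: "ordr y = enat N" by (cases "ordr y") auto
  have N1: "1 < N" using c oN by (simp add: one_enat_def)
  have Nk: "N \<le> k" using nk oN c by (simp add: Nbound_def)
  note o = ordr_enat[OF oN]
  have y1: "y \<noteq> 1" using o(3)[of 1] N1 by auto
  have "qint y N = 0" using o(2) y1 by (simp add: qint_def sum_gp_strict)
  moreover have "N \<in> {1..k}" using N1 Nk by simp
  ultimately have "qf y k = 0" unfolding qf_def by (intro prod_zero) auto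
  then show False using nz by simp
qed

lemma Kc_bound: "Kc q a b \<noteq> 0 \<Longrightarrow> enat a < Nbound (q 2 2) \<and> enat b < Nbound (q 1 1)"
  by (auto simp: Kc_def intro!: qf_bound)

lemma cl_rep: "count_list (replicate n x) x = n" by (induction n) auto
lemma cl_rep_other: "x \<noteq> y \<Longrightarrow> count_list (replicate n x) y = 0" by (induction n) auto

lemma mm_rep2: "mm (replicate a (2::nat)) = 0" by (induction a) auto
lemma mm_rep1: "mm (replicate b (1::nat)) = 0" by (induction b) (auto simp: count_list_0_iff)
lemma mm_rep1': "mm (replicate b (Suc 0)) = 0" using mm_rep1[of b] by (simp add: One_nat_def)

lemma Phi_mono_std:
  "Phi q (mono (replicate a 2 @ replicate b 1)) a' b' = (if a' = a \<and> b' = b then 1 else 0)"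
proof -
  have m: "mm (replicate a 2 @ replicate b (1::nat)) = 0"
    by (simp add: mm_append mm_rep1 mm_rep1' mm_rep2)
  have "(replicate a 2 @ replicate b (1::nat)) \<in> Wd a' b' \<longleftrightarrow> a' = a \<and> b' = b"
    by (auto simp: Wd_def letters_def cl_rep cl_rep_other)
  moreover have m': "mm (replicate a 2 @ replicate b (Suc 0)) = 0" using m by simp
  ultimately show ?thesis by (simp add: Phi_mono m m')
qed

lemma span_sum:
  assumes fin: "finite D" and e: "\<And>d. d \<in> D \<Longrightarrow> e d \<in> S"
  shows "(\<lambda>w. \<Sum>d\<in>D. c d * e d w) \<in> tspan S"
  using fin e
proof (induction D rule: finite_induct)
  case empty
  then show ?case using tspan.zero by (simp add: tzero_def)
next
  case (insert x F)
  have "(\<lambda>w. \<Sum>d\<in>insert x F. c d * e d w) = tadd (\<lambda>w. \<Sum>d\<in>F. c d * e d w) (tsmult (c x) (e x))"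
    using insert.hyps by (simp add: tadd_def tsmult_def add.commute)
  then show ?case using tspan.step[OF insert.IH insert.prems[of x]] insert.prems by simp
qed



lemma Phi_mono_std':
  "Phi q (mono (replicate a 2 @ replicate b (Suc 0))) a' b' = (if a' = a \<and> b' = b then 1 else 0)"
  using Phi_mono_std[of q a b a' b'] by simp

lemma S_ta: "qls_spanning_set q \<subseteq> tensor_alg"
proof
  fix x assume "x \<in> qls_spanning_set q"
  then consider "x = gen 1" | "x = gen 2" | a2 a1 where "x = mono (replicate a2 2 @ replicate a1 1)"
    unfolding qls_spanning_set_def by blast
  then show "x \<in> tensor_alg"
    by cases (auto simp: gen_def letters_def intro!: ta_mono)
qed

lemma lemmaA:
  fixes q :: "nat \<Rightarrow> nat \<Rightarrow> 'a::field"
  assumes ql: "q 1 2 * q 2 1 = 1" and g: "g \<in> lie_gen"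
  shows "\<exists>s\<in>tspan (qls_spanning_set q). (\<lambda>w. g w - s w) \<in> nichols_ideal q"
proof -
  let ?Q = "q 1 2"
  let ?S = "qls_spanning_set q"
  have Q0: "?Q \<noteq> 0" using ql by auto
  have gta: "g \<in> tensor_alg" using lie_ta[OF g] .
  define D where "D = {(a, b). Kc q a b \<noteq> 0 \<and> Phi q g a b \<noteq> 0}"
  define e where "e = (\<lambda>d::nat \<times> nat. mono (replicate (fst d) 2 @ replicate (snd d) 1) :: 'a tens)"
  define c where "c = (\<lambda>d::nat \<times> nat. Phi q g (fst d) (snd d))"
  define s where "s = (\<lambda>w. \<Sum>d\<in>D. c d * e d w)"
  have finD: "finite D"
  proof -
    have "D \<subseteq> (\<lambda>w. (count_list w 2, count_list w 1)) ` {w. g w \<noteq> 0}"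
    proof
      fix d assume "d \<in> D"
      then obtain a b where d: "d = (a, b)" "Phi q g a b \<noteq> 0" by (auto simp: D_def)
      have "\<exists>w\<in>Wd a b. g w \<noteq> 0"
      proof (rule ccontr)
        assume "\<not> ?thesis"
        then have "Phi q g a b = 0" unfolding Phi_def by (intro sum.neutral) auto
        then show False using d by simp
      qed
      then obtain w where w: "w \<in> Wd a b" "g w \<noteq> 0" by blast
      then show "d \<in> (\<lambda>w. (count_list w 2, count_list w 1)) ` {w. g w \<noteq> 0}"
        using d by (intro image_eqI[of _ _ w]) (auto simp: Wd_def)
    qed
    moreover have "finite {w. g w \<noteq> 0}" using gta by (simp add: tensor_alg_def)
    ultimately show ?thesis using finite_subset by blast
  qed
  have eS: "e d \<in> ?S" if d: "d \<in> D" for d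
  proof -
    obtain a b where ab: "d = (a, b)" "Kc q a b \<noteq> 0" "Phi q g a b \<noteq> 0" using d by (auto simp: D_def)
    have al: "Allowed ?Q a b" using lie_allowed[where q = q, OF Q0 g] ab(3) by blast
    have bd: "enat a < Nbound (q 2 2)" "enat b < Nbound (q 1 1)" using Kc_bound[OF ab(2)] by auto
    have ed: "e d = mono (replicate a 2 @ replicate b 1)" by (simp add: e_def ab)
    consider "a = 1" "b = 0" | "a = 0" "b = 1" | "a \<ge> 1" "b \<ge> 1" "\<not> (?Q ^ a = 1 \<and> ?Q ^ b = 1)"
      using al unfolding Allowed_def by blast
    then show ?thesis
    proof cases
      case 1 then show ?thesis by (simp add: ed qls_spanning_set_def gen_def)
    next
      case 2 then show ?thesis by (simp add: ed qls_spanning_set_def gen_def)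
    next
      case 3
      then have nd: "\<not> ord_dvd ?Q a \<or> \<not> ord_dvd ?Q b"
        using ord_dvd_iff[of a ?Q] ord_dvd_iff[of b ?Q] by auto
      have "mono (replicate a 2 @ replicate b 1) \<in> {mono (replicate a2 2 @ replicate a1 1) | a2 a1.
        1 \<le> a2 \<and> enat a2 < Nbound (q 2 2) \<and> 1 \<le> a1 \<and> enat a1 < Nbound (q 1 1) \<and>
        (\<not> ord_dvd (q 1 2) a2 \<or> \<not> ord_dvd (q 1 2) a1)}"
        using 3 bd nd by blast
      then show ?thesis unfolding ed qls_spanning_set_def by (rule UnI2)
    qed
  qed
  have sspan: "s \<in> tspan ?S" unfolding s_def by (rule span_sum[OF finD eS])
  have sta: "s \<in> tensor_alg" using span_ta[OF S_ta sspan] .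
  have Phis: "Phi q s a b = (if (a, b) \<in> D then Phi q g a b else 0)" for a b
  proof -
    have "Phi q s a b = (\<Sum>d\<in>D. c d * Phi q (e d) a b)" unfolding s_def by (rule Phi_lin_sum)
    also have "\<dots> = (\<Sum>d\<in>D. if d = (a, b) then c d else 0)"
      by (intro sum.cong refl) (auto simp: e_def Phi_mono_std Phi_mono_std')
    also have "\<dots> = (if (a, b) \<in> D then c (a, b) else 0)" by (rule sum.delta[OF finD])
    finally show ?thesis by (simp add: c_def)
  qed
  have hI: "(\<lambda>w. g w - s w) \<in> nichols_ideal q"
  proof (rule ideal_crit[OF ql ta_diff[OF gta sta]])
    fix a b assume K: "Kc q a b \<noteq> 0"
    show "Phi q (\<lambda>w. g w - s w) a b = 0"
      unfolding Phi_diff Phis using K by (auto simp: D_def)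
  qed
  show ?thesis using sspan hI by blast
qed

lemma elemB:
  fixes q :: "nat \<Rightarrow> nat \<Rightarrow> 'a::field"
  assumes ql: "q 1 2 * q 2 1 = 1" and x: "x \<in> qls_spanning_set q"
  shows "\<exists>l\<in>lie_gen. \<exists>i\<in>nichols_ideal q. x = tadd l i"
proof -
  let ?Q = "q 1 2"
  have tz: "tadd x tzero = x" by (simp add: tadd_def tzero_def)
  consider "x = gen 1" | "x = gen 2" | a2 a1 where "x = mono (replicate a2 2 @ replicate a1 1)"
    "1 \<le> a2" "1 \<le> a1" "\<not> ord_dvd ?Q a2 \<or> \<not> ord_dvd ?Q a1"
    using x unfolding qls_spanning_set_def by blast
  then show ?thesis
  proof cases
    case 1
    have "gen 1 \<in> lie_gen" using lie_gen.gen[of 1] by (simp add: letters_def)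
    then show ?thesis using 1 tz I_zero by metis
  next
    case 2
    have "gen 2 \<in> lie_gen" using lie_gen.gen[of 2] by (simp add: letters_def)
    then show ?thesis using 2 tz I_zero by metis
  next
    case 3
    have nd: "\<not> (?Q ^ a2 = 1 \<and> ?Q ^ a1 = 1)"
      using 3 ord_dvd_iff[of a2 ?Q] ord_dvd_iff[of a1 ?Q] by auto
    obtain l c where l: "l \<in> lie_gen" "c \<noteq> 0" "Hom q l a2 a1 c"
      using construct[where q = q, OF 3(2) 3(3) nd] by blast
    let ?l = "tsmult (inverse c) l"
    let ?i = "\<lambda>w. x w - ?l w"
    have ll: "?l \<in> lie_gen" using l(1) by (rule lie_gen.smult)
    have xta: "x \<in> tensor_alg" using S_ta x by blast
    have ita: "?i \<in> tensor_alg" using ta_diff[OF xta ta_smult[OF lie_ta[OF l(1)]]] .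
    have iI: "?i \<in> nichols_ideal q"
    proof (rule ideal_crit[OF ql ita])
      fix a b
      show "Phi q ?i a b = 0"
        using l(2) l(3) unfolding Phi_diff Phi_smult 3(1) Phi_mono_std Hom_def by simp
    qed
    have "x = tadd ?l ?i" by (simp add: tadd_def)
    then show ?thesis using ll iI by blast
  qed
qed

lemma lemmaB:
  fixes q :: "nat \<Rightarrow> nat \<Rightarrow> 'a::field"
  assumes ql: "q 1 2 * q 2 1 = 1"
  shows "x \<in> tspan (qls_spanning_set q) \<Longrightarrow> \<exists>l\<in>lie_gen. \<exists>i\<in>nichols_ideal q. x = tadd l i"
proof (induction rule: tspan.induct)
  case zero
  have "gen 1 \<in> lie_gen" using lie_gen.gen[of 1] by (simp add: letters_def)
  then have "tsmult 0 (gen 1) \<in> lie_gen" by (rule lie_gen.smult)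
  moreover have "tzero = tadd (tsmult 0 (gen 1)) (tzero :: 'a tens)" by (simp add: tadd_def tsmult_def tzero_def)
  ultimately show ?case using I_zero by blast
next
  case (step a s c)
  obtain l i where li: "l \<in> lie_gen" "i \<in> nichols_ideal q" "a = tadd l i" using step.IH by blast
  obtain l' i' where li': "l' \<in> lie_gen" "i' \<in> nichols_ideal q" "s = tadd l' i'"
    using elemB[OF ql step.hyps(2)] by blast
  have "tadd a (tsmult c s) = tadd (tadd l (tsmult c l')) (tadd i (tsmult c i'))"
    unfolding li(3) li'(3) by (simp add: tadd_def tsmult_def algebra_simps)
  moreover have "tadd l (tsmult c l') \<in> lie_gen" using li(1) li'(1) by (intro lie_gen.add lie_gen.smult)
  moreover have "tadd i (tsmult c i') \<in> nichols_ideal q" using li(2) li'(2) by (intro I_add I_smult)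
  ultimately show ?case by blast
qed

theorem theorem6p7:
  fixes q :: "nat \<Rightarrow> nat \<Rightarrow> 'a::field_char_0"
  assumes alg_closed: "\<And>p :: 'a poly. degree p > 0 \<Longrightarrow> \<exists>x. poly p x = 0"
    and nonzero: "\<And>i j. i \<in> letters \<Longrightarrow> j \<in> letters \<Longrightarrow> q i j \<noteq> 0"
    and quantum_linear: "q 1 2 * q 2 1 = 1"
  shows "mod_nichols q lie_gen = mod_nichols q (tspan (qls_spanning_set q))"
proof (rule set_eqI, rule iffI)
  fix x assume "x \<in> mod_nichols q lie_gen"
  then obtain g i where gi: "x = tadd g i" "g \<in> lie_gen" "i \<in> nichols_ideal q"
    by (auto simp: mod_nichols_def)
  obtain s where s: "s \<in> tspan (qls_spanning_set q)" "(\<lambda>w. g w - s w) \<in> nichols_ideal q"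
    using lemmaA[OF quantum_linear gi(2)] by blast
  have "x = tadd s (tadd (\<lambda>w. g w - s w) i)" using gi(1) by (simp add: tadd_def)
  moreover have "tadd (\<lambda>w. g w - s w) i \<in> nichols_ideal q" using s(2) gi(3) by (rule I_add)
  ultimately show "x \<in> mod_nichols q (tspan (qls_spanning_set q))"
    using s(1) by (auto simp: mod_nichols_def)
next
  fix x assume "x \<in> mod_nichols q (tspan (qls_spanning_set q))"
  then obtain e i where ei: "x = tadd e i" "e \<in> tspan (qls_spanning_set q)" "i \<in> nichols_ideal q"
    by (auto simp: mod_nichols_def)
  obtain l i' where li: "l \<in> lie_gen" "i' \<in> nichols_ideal q" "e = tadd l i'"
    using lemmaB[OF quantum_linear ei(2)] by blast
  have "x = tadd l (tadd i' i)" using ei(1) li(3) by (simp add: tadd_def add.assoc)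
  moreover have "tadd i' i \<in> nichols_ideal q" using li(2) ei(3) by (rule I_add)
  ultimately show "x \<in> mod_nichols q lie_gen" using li(1) by (auto simp: mod_nichols_def)
qed

end
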